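(* Write $V(b,\epsilon)=\sup_{\sigma,\sigma'\ge0}D_{b,\epsilon}(\sigma,\sigma')$. For $\theta\in\mathbb{R}^m$ let $\theta^+=\max(\theta,0)$ and $\theta^-=\max(-\theta,0)$ (entrywise). Then $$-V(b,\epsilon)=\inf_{\theta\in\mathbb{R}^m}\Big[-\eta\cdot\log g^{(\theta)}+\big(b^*-(b-\epsilon)\big)\cdot\theta^+ +\big(b+\epsilon-b^*\big)\cdot\theta^-\Big],$$ where all the coefficient vectors $b^*-(b-\epsilon)$ and $b+\epsilon-b^*$ are entrywise nonnegative. If $(\sigma,\sigma')$ attains $\sup D_{b,\epsilon}$, then $\theta^{bf}=\sigma'-\sigma$ attains the infimum on the right. Moreover, for every $\theta\in\mathbb{R}^m$ and $i\in[n]$, $A_i^\top\theta=T_\theta\widehat x_i$, so $g^{(\theta)}_i$ is the softmax of $T_\theta\widehat x_i$.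
   Context: Standard setup. Let $n\ge1$, $k\ge2$, $p\ge1$ be integers and $m=p+k$. There are $n$ data points $x_1,\dots,x_n$ and $p$ rules $h^{(1)},\dots,h^{(p)}$, each a map from $\{x_1,\dots,x_n\}$ to $\{1,\dots,k\}\cup\{?\}$, where "?" means abstain. Let $n_j\ge1$ be the number of indices $i$ with $h^{(j)}(x_i)\neq ?$. $\Delta_k$ denotes the probability simplex in $\mathbb{R}^k$; an element $z\in\Delta_k^n\subset\mathbb{R}^{nk}$ is written $z=(z_1,\dots,z_n)$ with $z_i=(z_{i1},\dots,z_{ik})\in\Delta_k$. For $j\le p$ let $h^{(j)}\in\{0,1\}^{nk}$ also denote the vector with $h^{(j)}_{i\ell}=1$ iff $h^{(j)}(x_i)=\ell$; for $\ell\le k$ let $\vec e^{\,n}_\ell\in\{0,1\}^{nk}$ have entries $(\vec e^{\,n}_\ell)_{i\ell'}=\mathbf 1(\ell'=\ell)$. The matrix $A\in\mathbb{R}^{m\times nk}$ has rows $a^{(j)}=h^{(j)}/n_j$ for $1\le j\le p$ and $a^{(p+\ell)}=\vec e^{\,n}_\ell/n$ for $1\le\ell\le k$. For $\theta\in\mathbb{R}^m$ put $a^{(\theta)}=A^\top\theta\in\mathbb{R}^{nk}$ (entries $a^{(\theta)}_{i\ell}$) and define $g^{(\theta)}\in\Delta_k^n$ by $g^{(\theta)}_{i\ell}=\exp(a^{(\theta)}_{i\ell})/\sum_{\ell'=1}^k\exp(a^{(\theta)}_{i\ell'})$; let $\mathcal G=\{g^{(\theta)}:\theta\in\mathbb{R}^m\}$.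 A fixed "true labeling" $\eta\in\Delta_k^n$ is given and $b^*:=A\eta\in\mathbb{R}^m$. Given $b\in\mathbb{R}^m$ and $\epsilon\in\mathbb{R}^m$ with $\epsilon\ge0$ and $b-\epsilon\le b^*\le b+\epsilon$ (entrywise), let $P=\{z\in\Delta_k^n:\ b-\epsilon\le Az\le b+\epsilon\}$ (entrywise). Logarithms act entrywise; $z\cdot\log g=\sum_{i,\ell}z_{i\ell}\log g_{i\ell}$ with conventions $0\log 0=0$, $\log 0=-\infty$. Dual function: for $\sigma,\sigma'\in\mathbb{R}^m_{\ge0}$, $D_{b,\epsilon}(\sigma,\sigma')=(\sigma'-\sigma)\cdot b-(\sigma'+\sigma)\cdot\epsilon-\sum_{i=1}^n\log\big(\sum_{\ell=1}^k\exp(a^{(\sigma'-\sigma)}_{i\ell})\big)$. For $i\in[n]$, $A_i\in\mathbb{R}^{m\times k}$ denotes the submatrix of $A$ formed by columns $k(i-1)+1,\dots,ki$; $\widehat x_i\in\mathbb{R}^{mk}$ is $A_i$ flattened in row-major order (its $((j-1)k+\ell)$-th entry is the $(j,\ell)$ entry of $A_i$); and $T_\theta=(\theta_1 I_k,\theta_2I_k,\dots,\theta_mI_k)\in\mathbb{R}^{k\times mk}$, with $I_k$ the $k\times k$ identity. *)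

theory Defs
  imports "HOL-Analysis.Analysis"
begin

(* Conventions (0-based indices):
   data points i < n, labels l < k, rules j < p, constraint rows j < m = p + k.
   A rule family is  h :: nat => nat => nat option,  h j i = None  means abstain,
   h j i = Some l  means rule j assigns label l to x_i.
   Vectors in R^{nk} are functions  nat => nat => real  (entry (i,l)),
   vectors in R^m are functions  nat => real  (entries j < m). *)

definition nj :: "nat \<Rightarrow> (nat \<Rightarrow> nat \<Rightarrow> nat option) \<Rightarrow> nat \<Rightarrow> nat" where
  "nj n h j = card {i. i < n \<and> h j i \<noteq> None}"

definition Amat :: "nat \<Rightarrow> nat \<Rightarrow> (nat \<Rightarrow> nat \<Rightarrow> nat option) \<Rightarrow> nat \<Rightarrow> nat \<Rightarrow> nat \<Rightarrow> real" where
  "Amat n p h j i l =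
     (if j < p then (if h j i = Some l then 1 / real (nj n h j) else 0)
      else (if l = j - p then 1 / real n else 0))"

definition a_theta :: "nat \<Rightarrow> nat \<Rightarrow> nat \<Rightarrow> (nat \<Rightarrow> nat \<Rightarrow> nat option) \<Rightarrow> (nat \<Rightarrow> real) \<Rightarrow> nat \<Rightarrow> nat \<Rightarrow> real" where
  "a_theta n k p h \<theta> i l = (\<Sum>j<p + k. \<theta> j * Amat n p h j i l)"

definition softmax :: "nat \<Rightarrow> (nat \<Rightarrow> real) \<Rightarrow> nat \<Rightarrow> real" where
  "softmax k v l = exp (v l) / (\<Sum>l'<k. exp (v l'))"

definition g_theta :: "nat \<Rightarrow> nat \<Rightarrow> nat \<Rightarrow> (nat \<Rightarrow> nat \<Rightarrow> nat option) \<Rightarrow> (nat \<Rightarrow> real) \<Rightarrow> nat \<Rightarrow> nat \<Rightarrow> real" where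
  "g_theta n k p h \<theta> i l =
     exp (a_theta n k p h \<theta> i l) / (\<Sum>l'<k. exp (a_theta n k p h \<theta> i l'))"

definition bstar :: "nat \<Rightarrow> nat \<Rightarrow> nat \<Rightarrow> (nat \<Rightarrow> nat \<Rightarrow> nat option) \<Rightarrow> (nat \<Rightarrow> nat \<Rightarrow> real) \<Rightarrow> nat \<Rightarrow> real" where
  "bstar n k p h \<eta> j = (\<Sum>i<n. \<Sum>l<k. Amat n p h j i l * \<eta> i l)"

definition Dual :: "nat \<Rightarrow> nat \<Rightarrow> nat \<Rightarrow> (nat \<Rightarrow> nat \<Rightarrow> nat option) \<Rightarrow> (nat \<Rightarrow> real) \<Rightarrow> (nat \<Rightarrow> real)
                     \<Rightarrow> (nat \<Rightarrow> real) \<Rightarrow> (nat \<Rightarrow> real) \<Rightarrow> real" where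
  "Dual n k p h b \<epsilon> \<sigma> \<sigma>' =
     (\<Sum>j<p + k. (\<sigma>' j - \<sigma> j) * b j) - (\<Sum>j<p + k. (\<sigma>' j + \<sigma> j) * \<epsilon> j)
     - (\<Sum>i<n. ln (\<Sum>l<k. exp (a_theta n k p h (\<lambda>j. \<sigma>' j - \<sigma> j) i l)))"

definition Vval :: "nat \<Rightarrow> nat \<Rightarrow> nat \<Rightarrow> (nat \<Rightarrow> nat \<Rightarrow> nat option) \<Rightarrow> (nat \<Rightarrow> real) \<Rightarrow> (nat \<Rightarrow> real) \<Rightarrow> real" where
  "Vval n k p h b \<epsilon> =
     Sup {Dual n k p h b \<epsilon> \<sigma> \<sigma>' | \<sigma> \<sigma>'. (\<forall>j<p + k. 0 \<le> \<sigma> j) \<and> (\<forall>j<p + k. 0 \<le> \<sigma>' j)}"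

definition Fobj :: "nat \<Rightarrow> nat \<Rightarrow> nat \<Rightarrow> (nat \<Rightarrow> nat \<Rightarrow> nat option) \<Rightarrow> (nat \<Rightarrow> nat \<Rightarrow> real)
                     \<Rightarrow> (nat \<Rightarrow> real) \<Rightarrow> (nat \<Rightarrow> real) \<Rightarrow> (nat \<Rightarrow> real) \<Rightarrow> real" where
  "Fobj n k p h \<eta> b \<epsilon> \<theta> =
     - (\<Sum>i<n. \<Sum>l<k. \<eta> i l * ln (g_theta n k p h \<theta> i l))
     + (\<Sum>j<p + k. (bstar n k p h \<eta> j - (b j - \<epsilon> j)) * max (\<theta> j) 0)
     + (\<Sum>j<p + k. (b j + \<epsilon> j - bstar n k p h \<eta> j) * max (- \<theta> j) 0)"

definition AiT_theta :: "nat \<Rightarrow> nat \<Rightarrow> nat \<Rightarrow> (nat \<Rightarrow> nat \<Rightarrow> nat option) \<Rightarrow> nat \<Rightarrow> (nat \<Rightarrow> real) \<Rightarrow> nat \<Rightarrow> real" where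
  "AiT_theta n k p h i \<theta> l = (\<Sum>j<p + k. Amat n p h j i l * \<theta> j)"

text \<open>x-hat_i in R^{mk}: A_i flattened row-major, 0-based entry j*k + l is A_i(j,l)\<close>
definition xhat :: "nat \<Rightarrow> nat \<Rightarrow> nat \<Rightarrow> (nat \<Rightarrow> nat \<Rightarrow> nat option) \<Rightarrow> nat \<Rightarrow> nat \<Rightarrow> real" where
  "xhat n k p h i c = Amat n p h (c div k) i (c mod k)"

text \<open>T_theta = (theta_1 I_k, ..., theta_m I_k) in R^{k x mk}: entry (l, c) with 0-based c = j*k + l'\<close>
definition Tmat :: "nat \<Rightarrow> (nat \<Rightarrow> real) \<Rightarrow> nat \<Rightarrow> nat \<Rightarrow> real" where
  "Tmat k \<theta> l c = (if c mod k = l then \<theta> (c div k) else 0)"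

definition Tx :: "nat \<Rightarrow> nat \<Rightarrow> nat \<Rightarrow> (nat \<Rightarrow> nat \<Rightarrow> nat option) \<Rightarrow> (nat \<Rightarrow> real) \<Rightarrow> nat \<Rightarrow> nat \<Rightarrow> real" where
  "Tx n k p h \<theta> i l = (\<Sum>c<(p + k) * k. Tmat k \<theta> l c * xhat n k p h i c)"

end

theory Submission
  imports Defs
begin

lemma maxdiff[simp]: "max x 0 - max (-x) 0 = (x::real)" by (simp add: max_def)
lemma maxdiff2[simp]: "max (x - y) 0 - max (y - x) 0 = (x - y::real)" by (simp add: max_def)

lemma sum_split_mult: "(\<Sum>c<m*k. f c) = (\<Sum>j<m. \<Sum>l<k. f (j*k+l::nat))"
proof (induction m)
  case 0 then show ?case by simp
next
  case (Suc m)
  have "{..<Suc m * k} = {..<m*k} \<union> {m*k..<m*k+k}" by auto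
  then have "(\<Sum>c<Suc m*k. f c) = (\<Sum>c<m*k. f c) + (\<Sum>c\<in>{m*k..<m*k+k}. f c)"
    by (simp add: sum.union_disjoint ivl_disj_int)
  also have "(\<Sum>c\<in>{m*k..<m*k+k}. f c) = (\<Sum>l<k. f (m*k+l))"
    using sum.shift_bounds_nat_ivl[of f 0 "m*k" k] by (simp add: atLeast0LessThan add.commute)
  finally show ?case using Suc by simp
qed

lemma lse_pos: "1 \<le> (k::nat) \<Longrightarrow> 0 < (\<Sum>l<k. exp (v l::real))"
  by (rule sum_pos) (auto simp: lessThan_empty_iff)

lemma F_eq:
  assumes eta_simplex: "\<forall>i<n. (\<forall>l<k. 0 \<le> \<eta> i l) \<and> (\<Sum>l<k. \<eta> i l) = 1"
    and k1: "1 \<le> k"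
  shows "Fobj n k p h \<eta> b \<epsilon> \<theta> = - Dual n k p h b \<epsilon> (\<lambda>j. max (-\<theta> j) 0) (\<lambda>j. max (\<theta> j) 0)"
proof -
  define a where "a = a_theta n k p h \<theta>"
  define L where "L i = ln (\<Sum>l<k. exp (a i l))" for i
  have lg: "ln (g_theta n k p h \<theta> i l) = a i l - L i" for i l
    unfolding g_theta_def L_def a_def[symmetric]
    using lse_pos[OF k1, of "a i"] by (simp add: ln_div)
  have s1: "(\<Sum>i<n. \<Sum>l<k. \<eta> i l * ln (g_theta n k p h \<theta> i l))
      = (\<Sum>i<n. \<Sum>l<k. \<eta> i l * a i l) - (\<Sum>i<n. L i)"
  proof -
    have "(\<Sum>i<n. \<Sum>l<k. \<eta> i l * ln (g_theta n k p h \<theta> i l))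
        = (\<Sum>i<n. (\<Sum>l<k. \<eta> i l * a i l) - L i * (\<Sum>l<k. \<eta> i l))"
      by (simp add: lg right_diff_distrib sum_subtractf sum_distrib_left mult.commute)
    also have "\<dots> = (\<Sum>i<n. (\<Sum>l<k. \<eta> i l * a i l) - L i)"
      using eta_simplex by (intro sum.cong) auto
    finally show ?thesis by (simp add: sum_subtractf)
  qed
  have s2: "(\<Sum>i<n. \<Sum>l<k. \<eta> i l * a i l) = (\<Sum>j<p+k. \<theta> j * bstar n k p h \<eta> j)"
    unfolding a_def a_theta_def bstar_def
    by (simp add: sum_distrib_left sum_distrib_right mult_ac sum.swap[of _ "{..<p+k}"] sum.swap[of _ "{..<k}" "{..<n}"])
  have at: "a_theta n k p h (\<lambda>j. max (\<theta> j) 0 - max (- \<theta> j) 0) = a"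
    by (simp add: a_def)
  show ?thesis
    unfolding Fobj_def Dual_def at s1 s2 L_def[symmetric]
    apply (simp add: sum_subtractf[symmetric] sum.distrib[symmetric] sum_negf[symmetric])
    apply (rule sum.cong, simp)
    apply (simp add: max_def algebra_simps)
    done
qed


lemma Dual_le:
  assumes "\<forall>j<p + k. 0 \<le> \<sigma> j" "\<forall>j<p + k. 0 \<le> \<sigma>' j" "\<forall>j<p + k. 0 \<le> \<epsilon> j"
  shows "Dual n k p h b \<epsilon> \<sigma> \<sigma>' \<le> Dual n k p h b \<epsilon> (\<lambda>j. max (-(\<sigma>' j - \<sigma> j)) 0) (\<lambda>j. max (\<sigma>' j - \<sigma> j) 0)"
proof -
  have "(\<Sum>j<p + k. (max (\<sigma>' j - \<sigma> j) 0 + max (-(\<sigma>' j - \<sigma> j)) 0) * \<epsilon> j)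
      \<le> (\<Sum>j<p + k. (\<sigma>' j + \<sigma> j) * \<epsilon> j)"
    using assms by (intro sum_mono mult_right_mono) (auto simp: max_def)
  then show ?thesis unfolding Dual_def by simp
qed

lemma Tx_eq:
  assumes "l < k"
  shows "AiT_theta n k p h i \<theta> l = Tx n k p h \<theta> i l"
proof -
  have k0: "0 < k" using assms by simp
  have "Tx n k p h \<theta> i l = (\<Sum>j<p+k. \<Sum>l'<k. Tmat k \<theta> l (j*k+l') * xhat n k p h i (j*k+l'))"
    unfolding Tx_def by (rule sum_split_mult)
  also have "\<dots> = (\<Sum>j<p+k. \<Sum>l'<k. (if l' = l then \<theta> j * Amat n p h j i l' else 0))"
    using k0 by (intro sum.cong refl) (simp add: Tmat_def xhat_def)
  also have "\<dots> = (\<Sum>j<p+k. \<theta> j * Amat n p h j i l)"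
    using assms by simp
  finally show ?thesis unfolding AiT_theta_def by (simp add: mult.commute)
qed

theorem lemma1:
  fixes n k p :: nat
    and h :: "nat \<Rightarrow> nat \<Rightarrow> nat option"
    and \<eta> :: "nat \<Rightarrow> nat \<Rightarrow> real"
    and b \<epsilon> :: "nat \<Rightarrow> real"
  assumes n_pos: "1 \<le> n" and k_ge: "2 \<le> k" and p_pos: "1 \<le> p"
    and h_range: "\<forall>j<p. \<forall>i<n. \<forall>l. h j i = Some l \<longrightarrow> l < k"
    and nj_pos: "\<forall>j<p. 1 \<le> nj n h j"
    and eta_simplex: "\<forall>i<n. (\<forall>l<k. 0 \<le> \<eta> i l) \<and> (\<Sum>l<k. \<eta> i l) = 1"
    and eps_nonneg: "\<forall>j<p + k. 0 \<le> \<epsilon> j"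
    and b_lower: "\<forall>j<p + k. b j - \<epsilon> j \<le> bstar n k p h \<eta> j"
    and b_upper: "\<forall>j<p + k. bstar n k p h \<eta> j \<le> b j + \<epsilon> j"
  shows "(\<forall>j<p + k. 0 \<le> bstar n k p h \<eta> j - (b j - \<epsilon> j) \<and> 0 \<le> b j + \<epsilon> j - bstar n k p h \<eta> j)
    \<and> - Vval n k p h b \<epsilon> = Inf (range (Fobj n k p h \<eta> b \<epsilon>))
    \<and> (\<forall>\<sigma> \<sigma>'. (\<forall>j<p + k. 0 \<le> \<sigma> j) \<and> (\<forall>j<p + k. 0 \<le> \<sigma>' j)
          \<and> (\<forall>\<tau> \<tau>'. (\<forall>j<p + k. 0 \<le> \<tau> j) \<and> (\<forall>j<p + k. 0 \<le> \<tau>' j)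
                 \<longrightarrow> Dual n k p h b \<epsilon> \<tau> \<tau>' \<le> Dual n k p h b \<epsilon> \<sigma> \<sigma>')
        \<longrightarrow> (\<forall>\<theta>. Fobj n k p h \<eta> b \<epsilon> (\<lambda>j. \<sigma>' j - \<sigma> j) \<le> Fobj n k p h \<eta> b \<epsilon> \<theta>))
    \<and> (\<forall>\<theta>. \<forall>i<n. (\<forall>l<k. AiT_theta n k p h i \<theta> l = Tx n k p h \<theta> i l)
          \<and> (\<forall>l<k. g_theta n k p h \<theta> i l = softmax k (Tx n k p h \<theta> i) l))"
proof -
  have k1: "1 \<le> k" using k_ge by simp
  let ?F = "Fobj n k p h \<eta> b \<epsilon>"
  let ?D = "Dual n k p h b \<epsilon>"
  define S where "S = {?D \<sigma> \<sigma>' | \<sigma> \<sigma>'. (\<forall>j<p + k. 0 \<le> \<sigma> j) \<and> (\<forall>j<p + k. 0 \<le> \<sigma>' j)}"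
  have FD: "?F \<theta> = - ?D (\<lambda>j. max (-\<theta> j) 0) (\<lambda>j. max (\<theta> j) 0)" for \<theta>
    by (rule F_eq[OF eta_simplex k1])
  have Fnn: "0 \<le> ?F \<theta>" for \<theta>
  proof -
    have g01: "0 < g_theta n k p h \<theta> i l \<and> g_theta n k p h \<theta> i l \<le> 1" if "l < k" for i l
    proof -
      have "exp (a_theta n k p h \<theta> i l) \<le> (\<Sum>l'<k. exp (a_theta n k p h \<theta> i l'))"
        using that by (intro member_le_sum) auto
      then show ?thesis unfolding g_theta_def using lse_pos[OF k1, of "a_theta n k p h \<theta> i"]
        by (simp add: divide_le_eq_1)
    qed
    have "(\<Sum>i<n. \<Sum>l<k. \<eta> i l * ln (g_theta n k p h \<theta> i l)) \<le> 0"
      using eta_simplex g01 by (intro sum_nonpos mult_nonneg_nonpos) auto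
    moreover have "0 \<le> (\<Sum>j<p + k. (bstar n k p h \<eta> j - (b j - \<epsilon> j)) * max (\<theta> j) 0)"
      using b_lower by (intro sum_nonneg) auto
    moreover have "0 \<le> (\<Sum>j<p + k. (b j + \<epsilon> j - bstar n k p h \<eta> j) * max (- \<theta> j) 0)"
      using b_upper by (intro sum_nonneg) auto
    ultimately show ?thesis unfolding Fobj_def by linarith
  qed
  have inS: "- ?F \<theta> \<in> S" for \<theta>
    unfolding S_def FD minus_minus
    by (rule CollectI, rule exI[of _ "\<lambda>j. max (-\<theta> j) 0"], rule exI[of _ "\<lambda>j. max (\<theta> j) 0"]) auto
  have Sle: "\<exists>\<theta>. x \<le> - ?F \<theta>" if "x \<in> S" for x
  proof -
    from that obtain \<sigma> \<sigma>' where x: "x = ?D \<sigma> \<sigma>'" and nn: "\<forall>j<p + k. 0 \<le> \<sigma> j" "\<forall>j<p + k. 0 \<le> \<sigma>' j"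
      unfolding S_def by auto
    have "x \<le> - ?F (\<lambda>j. \<sigma>' j - \<sigma> j)"
      using Dual_le[OF nn eps_nonneg] x FD[of "\<lambda>j. \<sigma>' j - \<sigma> j"] by simp
    then show ?thesis by blast
  qed
  have Sbdd: "x \<le> 0" if "x \<in> S" for x using Sle[OF that] Fnn by (meson neg_le_0_iff_le order_trans)
  have eq2: "- Vval n k p h b \<epsilon> = Inf (range ?F)"
  proof -
    have "Sup S = Sup (uminus ` range ?F)"
    proof (rule antisym)
      show "Sup S \<le> Sup (uminus ` range ?F)"
      proof (rule cSup_least)
        show "S \<noteq> {}" using inS by auto
        fix x assume "x \<in> S"
        then obtain \<theta> where "x \<le> - ?F \<theta>" using Sle by blast
        moreover have "- ?F \<theta> \<le> Sup (uminus ` range ?F)"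
          by (rule cSup_upper) (use Fnn in \<open>auto intro!: bdd_aboveI[where M=0] bdd_belowI[where m=0]\<close>)
        ultimately show "x \<le> Sup (uminus ` range ?F)" by linarith
      qed
      show "Sup (uminus ` range ?F) \<le> Sup S"
      proof (rule cSup_least)
        show "uminus ` range ?F \<noteq> {}" by auto
        fix x assume "x \<in> uminus ` range ?F"
        then obtain \<theta> where "x = - ?F \<theta>" by auto
        then show "x \<le> Sup S" using inS[of \<theta>] Sbdd
          by (auto intro!: cSup_upper bdd_aboveI[where M=0])
      qed
    qed
    then show ?thesis unfolding Vval_def S_def[symmetric] Inf_real_def by simp
  qed
  have eq3: "?F (\<lambda>j. \<sigma>' j - \<sigma> j) \<le> ?F \<theta>"
    if nn: "\<forall>j<p + k. 0 \<le> \<sigma> j" "\<forall>j<p + k. 0 \<le> \<sigma>' j"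
      and mx: "\<forall>\<tau> \<tau>'. (\<forall>j<p + k. 0 \<le> \<tau> j) \<and> (\<forall>j<p + k. 0 \<le> \<tau>' j) \<longrightarrow> ?D \<tau> \<tau>' \<le> ?D \<sigma> \<sigma>'"
    for \<sigma> \<sigma>' \<theta>
  proof -
    have "?D (\<lambda>j. max (-\<theta> j) 0) (\<lambda>j. max (\<theta> j) 0) \<le> ?D \<sigma> \<sigma>'" using mx by auto
    moreover have "?D \<sigma> \<sigma>' \<le> - ?F (\<lambda>j. \<sigma>' j - \<sigma> j)"
      using Dual_le[OF nn eps_nonneg] FD[of "\<lambda>j. \<sigma>' j - \<sigma> j"] by simp
    ultimately show ?thesis using FD[of \<theta>] by linarith
  qed
  have eq4: "AiT_theta n k p h i \<theta> l = Tx n k p h \<theta> i l \<and> g_theta n k p h \<theta> i l = softmax k (Tx n k p h \<theta> i) l"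
    if "l < k" for \<theta> i l
  proof -
    have "a_theta n k p h \<theta> i l' = Tx n k p h \<theta> i l'" if "l' < k" for l'
      using Tx_eq[OF that] unfolding AiT_theta_def a_theta_def by (simp add: mult.commute)
    then show ?thesis using Tx_eq[OF that] that unfolding g_theta_def softmax_def by simp
  qed
  show ?thesis using b_lower b_upper eq2 eq3 eq4 by auto
qed

end
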